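(* Let $ABC$ be a triangle with circumcenter $O$, let $l$ be a line in its plane, and let $T$ be the foot of the perpendicular from $O$ to $l$. Let $R$ and $S$ be variable points on $l$ satisfying $TS = TR$, and let $S', R'$ be the isogonal conjugates of $S, R$ with respect to $ABC$. Then, as $S, R$ vary on $l$, the line $S'R'$ remains parallel to a fixed line. *)

theory Defs
  imports "HOL-Analysis.Analysis"
begin

definition reflect_line :: "complex \<Rightarrow> complex \<Rightarrow> complex \<Rightarrow> complex" where
  "reflect_line a u x = a + (u / cnj u) * cnj (x - a)"

definition bisector_dir :: "complex \<Rightarrow> complex \<Rightarrow> complex \<Rightarrow> complex" where
  "bisector_dir A B C = (B - A) / complex_of_real (cmod (B - A)) + (C - A) / complex_of_real (cmod (C - A))"

definition line_through :: "complex \<Rightarrow> complex \<Rightarrow> complex set" where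
  "line_through p q = {x. collinear {p, q, x}}"

definition isogonal_conjugate :: "complex \<Rightarrow> complex \<Rightarrow> complex \<Rightarrow> complex \<Rightarrow> complex \<Rightarrow> bool" where
  "isogonal_conjugate A B C P Q \<longleftrightarrow>
     P \<notin> line_through A B \<and> P \<notin> line_through B C \<and> P \<notin> line_through C A \<and>
     Q \<in> line_through A (reflect_line A (bisector_dir A B C) P) \<and>
     Q \<in> line_through B (reflect_line B (bisector_dir B C A) P) \<and>
     Q \<in> line_through C (reflect_line C (bisector_dir C A B) P)"

end

theory Submission
  imports Defs
begin

lemma core1_a:
  fixes a b c p q ca cb cc pc qc :: complex
  assumes "a*ca = 1" "b*cb=1" "c*cc=1" "a\<noteq>b" "a\<noteq>c"
   and "(q-a)*(p-a)*((cb-ca)*(cc-ca)) = (qc-ca)*(pc-ca)*((b-a)*(c-a))"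
  shows "a^3 - a^2*(p+q+a*b*c*pc*qc) + a*(p*q + a*b*c*(pc+qc)) - a*b*c = 0"
proof -
  have "(a-b)*(a-c)*((q-a)*(p-a) - b*c*(a*qc-1)*(a*pc-1)) = 0"
    using assms(1,2,3,6) by algebra
  then have h: "(q-a)*(p-a) - b*c*(a*qc-1)*(a*pc-1) = 0" using assms(4,5) by simp
  have "a^3 - a^2*(p+q+a*b*c*pc*qc) + a*(p*q + a*b*c*(pc+qc)) - a*b*c
     = a*((q-a)*(p-a) - b*c*(a*qc-1)*(a*pc-1))" by algebra
  then show ?thesis using h by simp
qed

lemma col_iff: "collinear {x, y, z::complex} \<longleftrightarrow> Im ((z - x) * cnj (y - x)) = 0"
proof -
  have "collinear {x,y,z} \<longleftrightarrow> collinear {0, y - x, z - x}"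
  proof (cases "x = 0")
    case True then show ?thesis by simp
  next
    case False
    have "{x,y,z} = {y,x,z}" by auto
    then show ?thesis using collinear_3[of y x z] by (simp add: insert_commute)
  qed
  also have "\<dots> \<longleftrightarrow> (z-x)/(y-x) \<in> \<real>" by (rule collinear_iff_Reals)
  also have "\<dots> \<longleftrightarrow> Im ((z - x) * cnj (y - x)) = 0"
  proof (cases "y = x")
    case True then show ?thesis by simp
  next
    case False
    have n: "(y-x)*cnj(y-x) = of_real ((cmod (y-x))^2)" by (rule complex_norm_square[symmetric])
    have "cnj (y-x) \<noteq> 0" using False by simp
    then have "(z-x)/(y-x) = (z - x) * cnj (y - x) / ((y-x)*cnj(y-x))"
      by (simp add: divide_simps)
    then have "(z-x)/(y-x) = (z - x) * cnj (y - x) / of_real ((cmod (y-x))^2)" by (simp only: n)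
    then show ?thesis using False by (simp add: complex_is_Real_iff Im_divide_of_real)
  qed
  finally show ?thesis .
qed

lemma Im_ofr: "Im (complex_of_real r * w) = r * Im w" by simp

lemma unit_cnj: "cmod a = 1 \<Longrightarrow> a * cnj a = 1"
  using complex_norm_square[of a] by simp

lemma cubic_coeffs:
  fixes a b c X Y :: complex
  assumes "a \<noteq> b" "a \<noteq> 0" "b \<noteq> 0"
    and "a^3 - a^2*X + a*Y - a*b*c = 0" "b^3 - b^2*X + b*Y - a*b*c = 0"
    and "c^3 - c^2*X + c*Y - a*b*c = 0"
  shows "X = a+b+c \<and> Y = a*b+b*c+c*a"
proof -
  have ha: "a*(a*(a+b+c-X) + (Y - (a*b+b*c+c*a))) = 0" using assms(4) by algebra
  have hb: "b*(b*(a+b+c-X) + (Y - (a*b+b*c+c*a))) = 0" using assms(5) by algebra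
  have ha': "a*(a+b+c-X) + (Y - (a*b+b*c+c*a)) = 0" using ha assms(2) by simp
  have hb': "b*(b+a+c-X) + (Y - (a*b+b*c+c*a)) = 0" using hb assms(3) by (simp add: add_ac)
  have "(a-b)*(a+b+c-X) = 0" using ha' hb' by algebra
  then have x: "X = a+b+c" using assms(1) by simp
  then show ?thesis using ha' by algebra
qed

lemma core1:
  fixes a b c p q :: complex
  assumes ua: "cmod a = 1" and ub: "cmod b = 1" and uc: "cmod c = 1"
    and d: "a \<noteq> b" "b \<noteq> c" "c \<noteq> a"
    and ca: "Im ((q-a)*(p-a)*cnj((b-a)*(c-a))) = 0"
    and cb: "Im ((q-b)*(p-b)*cnj((c-b)*(a-b))) = 0"
    and cc: "Im ((q-c)*(p-c)*cnj((a-c)*(b-c))) = 0"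
  shows "p + q + a*b*c*cnj p*cnj q = a+b+c \<and> p*q + a*b*c*(cnj p + cnj q) = a*b+b*c+c*a"
proof -
  have ia: "a * cnj a = 1" "b * cnj b = 1" "c * cnj c = 1" using ua ub uc unit_cnj by auto
  have eq: "cnj w = w" if "Im w = 0" for w using that by (simp add: complex_eq_iff)
  have Ea: "(q-a)*(p-a)*((cnj b-cnj a)*(cnj c-cnj a)) = (cnj q-cnj a)*(cnj p-cnj a)*((b-a)*(c-a))"
    using eq[OF ca] by simp
  have Eb: "(q-b)*(p-b)*((cnj c-cnj b)*(cnj a-cnj b)) = (cnj q-cnj b)*(cnj p-cnj b)*((c-b)*(a-b))"
    using eq[OF cb] by simp
  have Ec: "(q-c)*(p-c)*((cnj a-cnj c)*(cnj b-cnj c)) = (cnj q-cnj c)*(cnj p-cnj c)*((a-c)*(b-c))"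
    using eq[OF cc] by simp
  have Fa: "a^3 - a^2*(p+q+a*b*c*cnj p*cnj q) + a*(p*q + a*b*c*(cnj p+cnj q)) - a*b*c = 0"
    using core1_a[OF ia(1) ia(2) ia(3) _ _ Ea] d by auto
  have Fb0: "b^3 - b^2*(p+q+b*c*a*cnj p*cnj q) + b*(p*q + b*c*a*(cnj p+cnj q)) - b*c*a = 0"
    using core1_a[OF ia(2) ia(3) ia(1) _ _ Eb] d by auto
  have Fc0: "c^3 - c^2*(p+q+c*a*b*cnj p*cnj q) + c*(p*q + c*a*b*(cnj p+cnj q)) - c*a*b = 0"
    using core1_a[OF ia(3) ia(1) ia(2) _ _ Ec] d by auto
  have abc: "b*c*a = a*b*c" "c*a*b = a*b*c" by (simp_all add: mult_ac)
  have Fb: "b^3 - b^2*(p+q+a*b*c*cnj p*cnj q) + b*(p*q + a*b*c*(cnj p+cnj q)) - a*b*c = 0"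
    using Fb0 unfolding abc .
  have Fc: "c^3 - c^2*(p+q+a*b*c*cnj p*cnj q) + c*(p*q + a*b*c*(cnj p+cnj q)) - a*b*c = 0"
    using Fc0 unfolding abc .
  have nz: "a \<noteq> 0" "b \<noteq> 0" using ua ub by auto
  show ?thesis using cubic_coeffs[OF d(1) nz Fa Fb Fc] by (simp add: algebra_simps)
qed

lemma core2:
  fixes s1 s2 s3 p q :: complex
  assumes "p + q + s3*cnj p*cnj q = s1" "p*q + s3*(cnj p + cnj q) = s2"
  shows "q*(p*cnj p - 1) = s2*cnj p - s1 - s3*(cnj p)^2 + p"
proof -
  have "q*(p*cnj p - 1) - (s2*cnj p - s1 - s3*(cnj p)^2 + p)
     = cnj p*(p*q + s3*(cnj p + cnj q) - s2) - (p + q + s3*cnj p*cnj q - s1)"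
    by (simp add: algebra_simps power2_eq_square)
  then show ?thesis using assms by simp
qed

lemma core3:
  fixes a b c p :: complex
  assumes "p * cnj p = 1"
    and "0 = (a*b+b*c+c*a)*cnj p - (a+b+c) - a*b*c*(cnj p)^2 + p"
  shows "p = a \<or> p = b \<or> p = c"
proof -
  have "(p-a)*(p-b)*(p-c) = 0" using assms by algebra
  then show ?thesis by auto
qed

lemma inj_core:
  fixes s r q s1 s2 s3 :: complex
  assumes "s + q + s3*cnj s*cnj q = s1" "s*q + s3*(cnj s + cnj q) = s2"
    and "r + q + s3*cnj r*cnj q = s1" "r*q + s3*(cnj r + cnj q) = s2"
    and "s \<noteq> r" "s3 \<noteq> 0"
  shows "q * cnj q = 1"
proof -
  have "s3*(cnj s - cnj r)*(q*cnj q - 1) =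
     q*((s + q + s3*cnj s*cnj q) - (r + q + s3*cnj r*cnj q)) - ((s*q + s3*(cnj s + cnj q)) - (r*q + s3*(cnj r + cnj q)))"
    by (simp add: algebra_simps)
  also have "\<dots> = 0" using assms(1-4) by simp
  finally have "s3*(cnj s - cnj r)*(q*cnj q - 1) = 0" .
  moreover have "cnj s - cnj r \<noteq> 0" using assms(5) by (metis complex_cnj_cancel_iff eq_iff_diff_eq_0)
  ultimately show ?thesis using assms(6) by simp
qed

lemma not_vertex:
  fixes a b c p q :: complex
  assumes ca: "Im ((q-a)*(p-a)*cnj((b-a)*(c-a))) = 0"
    and cb: "Im ((q-b)*(p-b)*cnj((c-b)*(a-b))) = 0"
    and cc: "Im ((q-c)*(p-c)*cnj((a-c)*(b-c))) = 0"
    and na: "Im ((p-a)*cnj(b-a)) \<noteq> 0" and nb: "Im ((p-b)*cnj(c-b)) \<noteq> 0"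
    and nc: "Im ((p-c)*cnj(a-c)) \<noteq> 0"
  shows "q \<noteq> a \<and> q \<noteq> b \<and> q \<noteq> c"
proof -
  have gen: "Im ((x-y)*(p-y)*cnj((z-y)*(x-y))) = (cmod (x-y))^2 * Im ((p-y)*cnj(z-y))" for x y z :: complex
  proof -
    have "(x-y)*(p-y)*cnj((z-y)*(x-y)) = of_real ((cmod (x-y))^2) * ((p-y)*cnj(z-y))"
      by (simp only: complex_norm_square complex_cnj_mult mult_ac)
    then show ?thesis by (simp only: Im_ofr)
  qed
  have ab: "a \<noteq> b" using na by auto
  have bc: "b \<noteq> c" using nb by auto
  have ca': "c \<noteq> a" using nc by auto
  have "q \<noteq> a"
  proof
    assume "q = a" then have "(cmod (a-b))^2 * Im ((p-b)*cnj(c-b)) = 0" using cb gen[of a b c] by simp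
    then show False using ab nb by simp
  qed
  moreover have "q \<noteq> b"
  proof
    assume "q = b" then have "(cmod (b-c))^2 * Im ((p-c)*cnj(a-c)) = 0" using cc gen[of b c a] by simp
    then show False using bc nc by simp
  qed
  moreover have "q \<noteq> c"
  proof
    assume "q = c" then have "(cmod (c-a))^2 * Im ((p-a)*cnj(b-a)) = 0" using ca gen[of c a b] by simp
    then show False using ca' na by simp
  qed
  ultimately show ?thesis by blast
qed

lemma norm_main:
  fixes a b c t u s r sp rp :: complex and lam :: real
  assumes ua: "cmod a = 1" and ub: "cmod b = 1" and uc: "cmod c = 1"
    and d: "a \<noteq> b" "b \<noteq> c" "c \<noteq> a"
    and sdef: "s = t + of_real lam * u" and rdef: "r = t - of_real lam * u"
    and perp: "t * cnj u + cnj t * u = 0" and lam: "lam \<noteq> 0" and u0: "u \<noteq> 0"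
    and sa: "Im ((sp-a)*(s-a)*cnj((b-a)*(c-a))) = 0"
    and sb: "Im ((sp-b)*(s-b)*cnj((c-b)*(a-b))) = 0"
    and sc: "Im ((sp-c)*(s-c)*cnj((a-c)*(b-c))) = 0"
    and sna: "Im ((s-a)*cnj(b-a)) \<noteq> 0" and snb: "Im ((s-b)*cnj(c-b)) \<noteq> 0"
    and snc: "Im ((s-c)*cnj(a-c)) \<noteq> 0"
    and ra: "Im ((rp-a)*(r-a)*cnj((b-a)*(c-a))) = 0"
    and rb: "Im ((rp-b)*(r-b)*cnj((c-b)*(a-b))) = 0"
    and rc: "Im ((rp-c)*(r-c)*cnj((a-c)*(b-c))) = 0"
    and rna: "Im ((r-a)*cnj(b-a)) \<noteq> 0" and rnb: "Im ((r-b)*cnj(c-b)) \<noteq> 0"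
    and rnc: "Im ((r-c)*cnj(a-c)) \<noteq> 0"
  shows "sp \<noteq> rp \<and> (\<exists>k::real. sp - rp = of_real k *
     (2*(a*b+b*c+c*a)*cnj u - 4*(a*b*c)*cnj t*cnj u + 2*u))"
proof -
  define s1 where "s1 = a+b+c"
  define s2 where "s2 = a*b+b*c+c*a"
  define s3 where "s3 = a*b*c"
  have s30: "s3 \<noteq> 0" using ua ub uc unfolding s3_def by auto
  have Es: "s + sp + s3*cnj s*cnj sp = s1" "s* sp + s3*(cnj s + cnj sp) = s2"
    using core1[OF ua ub uc d sa sb sc] unfolding s1_def s2_def s3_def by auto
  have Er: "r + rp + s3*cnj r*cnj rp = s1" "r* rp + s3*(cnj r + cnj rp) = s2"
    using core1[OF ua ub uc d ra rb rc] unfolding s1_def s2_def s3_def by auto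
  have sne: "s \<noteq> a \<and> s \<noteq> b \<and> s \<noteq> c" using sna snb snc by auto
  have Ns: "sp*(s*cnj s - 1) = s2*cnj s - s1 - s3*(cnj s)^2 + s" by (rule core2[OF Es])
  have Nr: "rp*(r*cnj r - 1) = s2*cnj r - s1 - s3*(cnj r)^2 + r" by (rule core2[OF Er])
  have K: "r*cnj r = s*cnj s"
  proof -
    have "s*cnj s - r*cnj r = 2* of_real lam*(t*cnj u + cnj t*u)"
      unfolding sdef rdef by (simp add: algebra_simps)
    then show ?thesis using perp by simp
  qed
  have D0: "s*cnj s - 1 \<noteq> 0"
  proof
    assume h: "s*cnj s - 1 = 0"
    then have "0 = s2*cnj s - s1 - s3*(cnj s)^2 + s" using Ns by simp
    then have "s = a \<or> s = b \<or> s = c" using core3[of s a b c] h unfolding s1_def s2_def s3_def by simp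
    then show False using sne by blast
  qed
  have diff: "(sp-rp)*(s*cnj s - 1) = of_real lam * (2* s2*cnj u - 4* s3*cnj t*cnj u + 2*u)"
  proof -
    have "(sp-rp)*(s*cnj s - 1) = (s2*cnj s - s1 - s3*(cnj s)^2 + s) - (s2*cnj r - s1 - s3*(cnj r)^2 + r)"
    proof -
      have "(sp-rp)*(s*cnj s - 1) = sp*(s*cnj s - 1) - rp*(r*cnj r - 1)" using K by (simp add: algebra_simps)
      then show ?thesis unfolding Ns Nr .
    qed
    also have "\<dots> = of_real lam * (2* s2*cnj u - 4* s3*cnj t*cnj u + 2*u)"
      unfolding sdef rdef by (simp add: algebra_simps power2_eq_square)
    finally show ?thesis .
  qed
  have Dreal: "s*cnj s - 1 = of_real ((cmod s)^2 - 1)"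
    using complex_norm_square[of s] by simp
  have ex: "\<exists>k::real. sp - rp = of_real k * (2* s2*cnj u - 4* s3*cnj t*cnj u + 2*u)"
  proof (intro exI)
    show "sp - rp = of_real (lam / ((cmod s)^2 - 1)) * (2* s2*cnj u - 4* s3*cnj t*cnj u + 2*u)"
      using diff D0 unfolding Dreal by (simp add: field_simps)
  qed
  have neq: "sp \<noteq> rp"
  proof
    assume e: "sp = rp"
    have sr: "s \<noteq> r" using lam u0 unfolding sdef rdef by auto
    have Erp: "r + sp + s3*cnj r*cnj sp = s1" "r* sp + s3*(cnj r + cnj sp) = s2" using Er e by auto
    have u1: "sp * cnj sp = 1" by (rule inj_core[OF Es Erp sr s30])
    have Es2: "sp + s + s3*cnj sp*cnj s = s1" "sp* s + s3*(cnj sp + cnj s) = s2"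
      using Es by (simp_all add: algebra_simps)
    have "s*(sp*cnj sp - 1) = s2*cnj sp - s1 - s3*(cnj sp)^2 + sp" by (rule core2[OF Es2])
    then have "0 = s2*cnj sp - s1 - s3*(cnj sp)^2 + sp" using u1 by simp
    then have "sp = a \<or> sp = b \<or> sp = c" using core3[of sp a b c] u1 unfolding s1_def s2_def s3_def by simp
    then show False using not_vertex[OF sa sb sc sna snb snc] by blast
  qed
  show ?thesis using neq ex unfolding s2_def s3_def by simp
qed

lemma refl_cond:
  fixes A B C P Q :: complex
  assumes nc: "\<not> collinear {A, B, C}" and PA: "P \<noteq> A"
    and Q: "Q \<in> line_through A (reflect_line A (bisector_dir A B C) P)"
  shows "Im ((Q-A)*(P-A)*cnj((B-A)*(C-A))) = 0"
proof -
  have AB: "A \<noteq> B" using nc by auto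
  have AC: "A \<noteq> C" using nc by (metis collinear_2 insert_absorb2 insert_commute)
  define nB where "nB = cmod (B - A)"
  define nC where "nC = cmod (C - A)"
  have nB0: "nB > 0" using AB unfolding nB_def by simp
  have nC0: "nC > 0" using AC unfolding nC_def by simp
  define e1 where "e1 = (B - A) / of_real nB"
  define e2 where "e2 = (C - A) / of_real nC"
  define u where "u = bisector_dir A B C"
  have ud: "u = e1 + e2" unfolding u_def bisector_dir_def e1_def e2_def nB_def nC_def by simp
  have nsq: "z * cnj z = of_real ((cmod z)^2)" for z using complex_norm_square[of z] by simp
  have e1u: "e1 * cnj e1 = 1"
  proof -
    have "e1 * cnj e1 = (B-A)*cnj(B-A) / of_real (nB^2)" unfolding e1_def by (simp add: power2_eq_square)
    then show ?thesis using nB0 unfolding nsq nB_def by simp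
  qed
  have e2u: "e2 * cnj e2 = 1"
  proof -
    have "e2 * cnj e2 = (C-A)*cnj(C-A) / of_real (nC^2)" unfolding e2_def by (simp add: power2_eq_square)
    then show ?thesis using nC0 unfolding nsq nC_def by simp
  qed
  have u0: "u \<noteq> 0"
  proof
    assume "u = 0"
    then have e: "e2 = - e1" using ud by (simp add: eq_neg_iff_add_eq_0 add.commute)
    have "C - A = of_real nC * e2" unfolding e2_def using nC0 by simp
    also have "\<dots> = - of_real nC * e1" using e by simp
    finally have CA: "C - A = - of_real (nC / nB) * (B - A)" unfolding e1_def using nB0 by simp
    have "Im ((C - A) * cnj (B - A)) = - (nC/nB) * Im ((B-A)*cnj(B-A))"
      unfolding CA by (simp add: Im_ofr[symmetric] mult.assoc del: Im_ofr)
    also have "\<dots> = 0" unfolding nsq by simp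
    finally have "collinear {A, B, C}" using col_iff by simp
    then show False using nc by simp
  qed
  have cu0: "cnj u \<noteq> 0" using u0 by simp
  have sq: "u^2 = e1*e2*(u*cnj u)" using e1u e2u unfolding ud by (simp add: power2_eq_square) algebra
  have csq: "(cnj u)^2 = cnj e1 * cnj e2 * (u*cnj u)"
  proof -
    have "cnj (u^2) = cnj (e1*e2*(u*cnj u))" using sq by simp
    then show ?thesis by (simp add: mult_ac)
  qed
  have ratio: "cnj u / u = cnj e1 * cnj e2"
  proof -
    have "cnj u / u = (cnj u)^2 / (u * cnj u)" using u0 cu0 by (simp add: power2_eq_square field_simps)
    then show ?thesis using csq u0 cu0 by simp
  qed
  define X where "X = reflect_line A u P"
  have XA: "cnj (X - A) = (cnj u / u) * (P - A)" unfolding X_def reflect_line_def by simp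
  have "collinear {A, X, Q}" using Q unfolding X_def u_def line_through_def by simp
  then have "Im ((Q - A) * cnj (X - A)) = 0" using col_iff by simp
  then have h: "Im ((Q - A) * (P - A) * (cnj e1 * cnj e2)) = 0" unfolding XA ratio by (simp add: mult_ac)
  have "cnj e1 * cnj e2 = cnj ((B-A)*(C-A)) / of_real (nB * nC)" unfolding e1_def e2_def by simp
  then have "Im ((Q-A)*(P-A)*cnj((B-A)*(C-A))) / (nB*nC) = 0" using h
    by (metis Im_divide_of_real times_divide_eq_right)
  then show ?thesis using nB0 nC0 by simp
qed

lemma scale4: "Im ((of_real r*x)*(of_real r*y)*cnj((of_real r*z)*(of_real r*w))) = r^4 * Im(x*y*cnj(z*w))"
proof -
  have "(of_real r*x)*(of_real r*y)*cnj((of_real r*z)*(of_real r*w)) = of_real (r^4) * (x*y*cnj(z*w))"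
    by (simp add: power4_eq_xxxx mult_ac)
  then show ?thesis by (simp only: Im_ofr)
qed

lemma scale2: "Im ((of_real r*x)*cnj(of_real r*y)) = r^2 * Im(x*cnj y)"
proof -
  have "(of_real r*x)*cnj(of_real r*y) = of_real (r^2) * (x*cnj y)"
    by (simp add: power2_eq_square mult_ac)
  then show ?thesis by (simp only: Im_ofr)
qed

lemma line_param:
  fixes p q x :: complex
  assumes "p \<noteq> q" "x \<in> line_through p q"
  shows "\<exists>mu::real. x = p + of_real mu * (q - p)"
proof -
  have "Im ((x - p) * cnj (q - p)) = 0" using assms(2) col_iff unfolding line_through_def by simp
  then have "Im ((x-p)/(q-p)) = 0" by (simp add: Im_complex_div_eq_0)
  then have "(x-p)/(q-p) = of_real (Re ((x-p)/(q-p)))" by (simp add: complex_eq_iff)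
  then have "x - p = of_real (Re ((x-p)/(q-p))) * (q - p)" using assms(1) by (simp add: field_simps)
  then show ?thesis by (metis add_diff_cancel_left' diff_add_cancel)
qed

theorem proposition3p2:
  fixes A B C Oc p q T :: complex
  assumes "\<not> collinear {A, B, C}"
    and "dist Oc A = dist Oc B" and "dist Oc B = dist Oc C"
    and "p \<noteq> q"
    and "T \<in> line_through p q"
    and "(Oc - T) \<bullet> (q - p) = 0"
  shows "\<exists>d::complex. d \<noteq> 0 \<and>
     (\<forall>R S R' S'. R \<in> line_through p q \<longrightarrow> S \<in> line_through p q \<longrightarrow>
        dist T S = dist T R \<longrightarrow> S \<noteq> R \<longrightarrow>
        isogonal_conjugate A B C S S' \<longrightarrow> isogonal_conjugate A B C R R' \<longrightarrow>
        S' \<noteq> R' \<and> (\<exists>k::real. S' - R' = k *\<^sub>R d))"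
proof -
  note nc = assms(1)
  have AB: "A \<noteq> B" using nc by auto
  have AC: "A \<noteq> C" using nc by (metis collinear_2 insert_absorb2 insert_commute)
  have BC: "B \<noteq> C" using nc by auto
  have ncB: "\<not> collinear {B, C, A}" using nc by (simp add: insert_commute)
  have ncC: "\<not> collinear {C, A, B}" using nc by (simp add: insert_commute)
  define rho where "rho = dist Oc A"
  have rB: "dist Oc B = rho" and rC: "dist Oc C = rho" using assms(2,3) unfolding rho_def by auto
  have rho0: "rho > 0"
  proof -
    have "rho \<noteq> 0"
    proof
      assume "rho = 0"
      then have "A = Oc" "B = Oc" using rB unfolding rho_def by auto
      then show False using AB by simp
    qed
    then show ?thesis unfolding rho_def by simp
  qed
  define nm where "nm z = (z - Oc) / of_real rho" for z
  have dif: "z - w = of_real rho * (nm z - nm w)" for z w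
    unfolding nm_def using rho0 by (simp add: field_simps)
  have unit: "cmod (nm z) = 1" if "dist Oc z = rho" for z
    using that rho0 unfolding nm_def by (simp add: norm_divide dist_norm norm_minus_commute)
  have ua: "cmod (nm A) = 1" using unit rho_def by simp
  have ub: "cmod (nm B) = 1" using unit rB by simp
  have uc: "cmod (nm C) = 1" using unit rC by simp
  have ninj: "nm z \<noteq> nm w" if "z \<noteq> w" for z w using that dif[of z w] by auto
  define a b c where "a = nm A" and "b = nm B" and "c = nm C"
  define u where "u = q - p"
  define t where "t = nm T"
  have u0: "u \<noteq> 0" using assms(4) unfolding u_def by simp
  have perp: "t * cnj u + cnj t * u = 0"
  proof -
    have "(Oc - T) \<bullet> u = 0" using assms(6) unfolding u_def .
    then have "Re (T - Oc) * Re u + Im (T - Oc) * Im u = 0" unfolding inner_complex_def by (simp add: algebra_simps)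
    then show ?thesis unfolding t_def nm_def using rho0 by (simp add: complex_eq_iff algebra_simps add_divide_distrib[symmetric])
  qed
  define d0 where "d0 = 2*(a*b+b*c+c*a)*cnj u - 4*(a*b*c)*cnj t*cnj u + 2*u"
  obtain m0 where m0: "T = p + of_real m0 * u" using line_param[OF assms(4,5)] unfolding u_def by blast
  have key: "S' \<noteq> R' \<and> (\<exists>k::real. S' - R' = k *\<^sub>R d0)"
    if R: "R \<in> line_through p q" and S: "S \<in> line_through p q" and dTS: "dist T S = dist T R"
      and SR: "S \<noteq> R" and iS: "isogonal_conjugate A B C S S'" and iR: "isogonal_conjugate A B C R R'"
    for R S R' S'
  proof -
    obtain m1 where m1: "S = p + of_real m1 * u" using line_param[OF assms(4) S] unfolding u_def by blast
    obtain m2 where m2: "R = p + of_real m2 * u" using line_param[OF assms(4) R] unfolding u_def by blast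
    have dg: "dist T (p + of_real m * u) = \<bar>m - m0\<bar> * cmod u" for m
    proof -
      have "T - (p + of_real m * u) = of_real (m0 - m) * u" unfolding m0 by (simp add: algebra_simps)
      then show ?thesis unfolding dist_norm by (simp only: norm_mult norm_of_real abs_minus_commute)
    qed
    have "\<bar>m1 - m0\<bar> * cmod u = \<bar>m2 - m0\<bar> * cmod u" using dTS unfolding m1 m2 dg .
    then have "\<bar>m1 - m0\<bar> = \<bar>m2 - m0\<bar>" using u0 by simp
    moreover have "m1 \<noteq> m2" using SR m1 m2 by auto
    ultimately have m2e: "m2 - m0 = - (m1 - m0)" by (auto simp: abs_if split: if_splits)
    define lam where "lam = (m1 - m0) / rho"
    have lam0: "lam \<noteq> 0" using \<open>m1 \<noteq> m2\<close> m2e rho0 unfolding lam_def by auto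
    have sdef: "nm S = t + of_real lam * u"
    proof -
      have rl: "rho * lam = m1 - m0" using rho0 unfolding lam_def by simp
      have "S - T = of_real (rho * lam) * u" unfolding rl m1 m0 by (simp add: algebra_simps)
      then have "S - T = of_real rho * (of_real lam * u)" by (simp add: mult.assoc)
      then have "nm S - nm T = of_real lam * u" using dif[of S T] rho0 by simp
      then show ?thesis unfolding t_def by (simp add: algebra_simps)
    qed
    have rdef: "nm R = t - of_real lam * u"
    proof -
      have rl: "- (rho * lam) = m2 - m0" using rho0 m2e unfolding lam_def by simp
      have "R - T = of_real (- (rho * lam)) * u" unfolding rl m2 m0 by (simp add: algebra_simps)
      then have "R - T = of_real rho * (- of_real lam * u)" by (simp add: mult.assoc)
      then have "of_real rho * (nm R - nm T) = of_real rho * (- of_real lam * u)" using dif[of R T] by simp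
      then have "nm R - nm T = - of_real lam * u" using rho0 by (simp only: mult_cancel_left) simp
      then show ?thesis unfolding t_def by (simp add: algebra_simps)
    qed
    have r4: "rho^4 \<noteq> 0" "rho^2 \<noteq> 0" using rho0 by auto
    have C4: "Im ((nm Q - nm X)*(nm P - nm X)*cnj((nm Y - nm X)*(nm Z - nm X))) = 0"
      if "Im ((Q - X)*(P - X)*cnj((Y - X)*(Z - X))) = 0" for Q P X Y Z
      using that r4 unfolding dif[of Q X] dif[of P X] dif[of Y X] dif[of Z X] scale4 by simp
    have C2: "Im ((nm P - nm X)*cnj(nm Y - nm X)) \<noteq> 0"
      if "P \<notin> line_through X Y" for P X Y
    proof -
      have "Im ((P - X)*cnj(Y - X)) \<noteq> 0" using that col_iff unfolding line_through_def by simp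
      then show ?thesis using r4 unfolding dif[of P X] dif[of Y X] scale2 by simp
    qed
    have PA: "P \<noteq> A" "P \<noteq> B" "P \<noteq> C" if "isogonal_conjugate A B C P Q" for P Q
      using that unfolding isogonal_conjugate_def line_through_def by auto
    have all: "Im ((nm Q - a)*(nm P - a)*cnj((b-a)*(c-a))) = 0 \<and>
               Im ((nm Q - b)*(nm P - b)*cnj((c-b)*(a-b))) = 0 \<and>
               Im ((nm Q - c)*(nm P - c)*cnj((a-c)*(b-c))) = 0 \<and>
               Im ((nm P - a)*cnj(b-a)) \<noteq> 0 \<and> Im ((nm P - b)*cnj(c-b)) \<noteq> 0 \<and>
               Im ((nm P - c)*cnj(a-c)) \<noteq> 0"
      if ic: "isogonal_conjugate A B C P Q" for P Q
    proof -
      note pa = PA[OF ic]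
      have i: "Q \<in> line_through A (reflect_line A (bisector_dir A B C) P)"
        "Q \<in> line_through B (reflect_line B (bisector_dir B C A) P)"
        "Q \<in> line_through C (reflect_line C (bisector_dir C A B) P)"
        "P \<notin> line_through A B" "P \<notin> line_through B C" "P \<notin> line_through C A"
        using ic unfolding isogonal_conjugate_def by auto
      show ?thesis unfolding a_def b_def c_def
        using C4[OF refl_cond[OF nc pa(1) i(1)]] C4[OF refl_cond[OF ncB pa(2) i(2)]]
          C4[OF refl_cond[OF ncC pa(3) i(3)]] C2[OF i(4)] C2[OF i(5)] C2[OF i(6)] by blast
    qed
    have dd: "a \<noteq> b" "b \<noteq> c" "c \<noteq> a" unfolding a_def b_def c_def using ninj AB BC AC by auto
    have ua': "cmod a = 1" "cmod b = 1" "cmod c = 1" using ua ub uc unfolding a_def b_def c_def by auto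
    note aS = all[OF iS] and aR = all[OF iR]
    have res: "nm S' \<noteq> nm R' \<and> (\<exists>k::real. nm S' - nm R' = of_real k * d0)"
      unfolding d0_def
      using norm_main[OF ua' dd sdef rdef perp lam0 u0] aS aR by blast
    then obtain k where k: "nm S' - nm R' = of_real k * d0" by blast
    have "S' \<noteq> R'" using res by auto
    moreover have "S' - R' = (rho * k) *\<^sub>R d0" unfolding dif[of S' R'] k scaleR_conv_of_real by simp
    ultimately show ?thesis by blast
  qed
  show ?thesis
  proof (cases "d0 = 0")
    case False
    then show ?thesis using key by blast
  next
    case True
    have *: "S' \<noteq> R' \<and> (\<exists>k::real. S' - R' = k *\<^sub>R 1)"
      if "R \<in> line_through p q" "S \<in> line_through p q" "dist T S = dist T R" "S \<noteq> R"
        "isogonal_conjugate A B C S S'" "isogonal_conjugate A B C R R'" for R S R' S'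
      using key[OF that] True by auto
    have "(1::complex) \<noteq> 0" by simp
    then show ?thesis using * by blast
  qed
qed

end
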